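(* Consider the inner product on the parabola $y=x^2$ $$\langle f,g\rangle=\int_{\mathbb R}f(x,x^2)\,g(x,x^2)\,e^{-x^2}\,dx .$$ For $n\ge1$, the polynomials $$Y_{n,1}(x,y)=L_n^{-\frac12}(y),\qquad Y_{n,2}(x,y)=x\,L_{n-1}^{\frac12}(y)$$ form an orthogonal basis of $\mathcal H_n$, where $L_n^{\alpha}$ are the Laguerre polynomials. Moreover, both $u=Y_{n,1}$ and $u=Y_{n,2}$ satisfy $$x\,\partial_x\partial_y u+y\,\partial_y^2u+\big(\tfrac12-y\big)\partial_yu-x\,\partial_xu=-n\,u .$$
   Context: $L_n^{\alpha}$ denotes the Laguerre polynomial of degree $n$, orthogonal with respect to $t^{\alpha}e^{-t}$ on $[0,\infty)$. $\mathcal H_n$ denotes the space of polynomials $P$ of degree $n$ in two variables with $\langle P,Q\rangle=0$ for all polynomials $Q$ of degree $<n$ and $\langle P,P\rangle>0$, considered modulo the ideal $\langle y-x^2\rangle$; it has dimension 2 for $n\ge 1$. *)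

theory Defs
  imports "HOL-Analysis.Analysis" "HOL-Computational_Algebra.Polynomial"
begin

text \<open>Bivariate real polynomials P(x,y) are represented as polynomials in y whose
coefficients are polynomials in x: type real poly poly.\<close>

type_synonym bipoly = "real poly poly"

definition beval :: "bipoly \<Rightarrow> real \<Rightarrow> real \<Rightarrow> real" where
  "beval P x y = poly (map_poly (\<lambda>c. poly c x) P) y"

definition total_degree :: "bipoly \<Rightarrow> nat" where
  "total_degree P = (if P = 0 then 0
     else Max {degree (coeff P j) + j | j. j \<le> degree P \<and> coeff P j \<noteq> 0})"

definition dx :: "bipoly \<Rightarrow> bipoly" where "dx P = map_poly pderiv P"
definition dy :: "bipoly \<Rightarrow> bipoly" where "dy P = pderiv P"
definition mul_x :: "bipoly \<Rightarrow> bipoly" where "mul_x P = smult [:0, 1:] P"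
definition mul_y :: "bipoly \<Rightarrow> bipoly" where "mul_y P = pCons 0 P"
definition const_bp :: "real \<Rightarrow> bipoly" where "const_bp a = [:[:a:]:]"

text \<open>The generator y - x^2 of the ideal.\<close>
definition parab :: bipoly where "parab = [: -[:0, 0, 1:], 1 :]"

definition ip :: "bipoly \<Rightarrow> bipoly \<Rightarrow> real" where
  "ip P Q = (LINT x|lborel. beval P x (x^2) * beval Q x (x^2) * exp (-(x^2)))"

text \<open>Elements of H_n (before passing to the quotient).\<close>
definition in_H :: "nat \<Rightarrow> bipoly \<Rightarrow> bool" where
  "in_H n P \<longleftrightarrow> total_degree P = n \<and> (\<forall>Q. total_degree Q < n \<longrightarrow> ip P Q = 0) \<and> ip P P > 0"

definition laguerre :: "real \<Rightarrow> nat \<Rightarrow> real poly" where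
  "laguerre \<alpha> n = (\<Sum>k\<le>n. monom ((-1)^k * ((real n + \<alpha>) gchoose (n - k)) / fact k) k)"

definition in_y :: "real poly \<Rightarrow> bipoly" where "in_y p = map_poly (\<lambda>c. [:c:]) p"

definition Y1 :: "nat \<Rightarrow> bipoly" where "Y1 n = in_y (laguerre (-1/2) n)"
definition Y2 :: "nat \<Rightarrow> bipoly" where "Y2 n = mul_x (in_y (laguerre (1/2) (n - 1)))"

definition Dop :: "bipoly \<Rightarrow> bipoly" where
  "Dop u = mul_x (dx (dy u)) + mul_y (dy (dy u)) + smult [:1/2:] (dy u) - mul_y (dy u)
           - mul_x (dx u)"

end

theory Submission
  imports Defs "HOL-Probability.Distributions"
begin


definition mom :: "nat \<Rightarrow> real" where
  "mom k = (if even k then sqrt pi * (fact k / (2 ^ k * fact (k div 2))) else 0)"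

lemma mom_int: "has_bochner_integral lborel (\<lambda>x::real. exp (-x\<^sup>2) * x ^ k) (mom k)"
proof (cases "even k")
  case True
  then obtain j where k: "k = 2 * j" by blast
  have "has_bochner_integral lborel (\<lambda>x::real. exp (-x\<^sup>2)*x^(2 * j))
      (2 *\<^sub>R ((sqrt pi / 2) * (fact (2 * j) / (2 ^ (2 * j) * fact j))))"
    by (rule has_bochner_integral_even_function[OF gaussian_moment_even_pos[where k=j]]) simp
  then show ?thesis using k by (simp add: mom_def)
next
  case False
  then obtain j where k: "k = 2 * j + 1" using oddE by blast
  have "has_bochner_integral lborel (\<lambda>x::real. exp (-x\<^sup>2)*x^(2 * j + 1)) 0"
    by (rule has_bochner_integral_odd_function[OF gaussian_moment_odd_pos[where k=j]]) simp
  then show ?thesis using k by (simp add: mom_def)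
qed

lemma mom_rec: "real k * mom (k - 1) = 2 * mom (k + 1)"
proof (cases "even k")
  case True then show ?thesis by (cases k) (auto simp: mom_def)
next
  case False
  then obtain j where k: "k = 2 * j + 1" using oddE by blast
  define F where "F = (fact (2*j) :: real)"
  define G where "G = (fact j :: real)"
  define P where "P = (2::real) ^ (2*j)"
  have F: "fact (2*j+2) = (real (2*j+2)) * (2*j+1) * F"
    by (simp add: fact_Suc algebra_simps F_def)
  have G: "fact (j+1) = real (j+1) * G" by (simp add: G_def)
  have P: "(2::real)^(2*j+2) = 4 * P" by (simp add: P_def power_add)
  have "(2*j+2) div 2 = j+1" by simp
  then have m2: "mom (k+1) = sqrt pi * ((real (2*j+2)) * (2*j+1) * F / (4 * P * (real (j+1) * G)))"
    using k F G P by (simp add: mom_def del: fact_Suc)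
  have m0: "mom (k-1) = sqrt pi * (F / (P * G))" using k by (simp add: mom_def F_def G_def P_def)
  have "F > 0" "G > 0" "P > 0" by (auto simp: F_def G_def P_def)
  have l: "real k * mom (k-1) = (2*j+1) * (sqrt pi * (F / (P * G)))" using m0 k by simp
  have r: "2 * mom (k+1) = 2 * (sqrt pi * ((real (2*j+2)) * (2*j+1) * F / (4 * P * (real (j+1) * G))))"
    using m2 by simp
  have e: "real (2*j+2) * (2*j+1) * F / (4 * P * (real (j+1) * G)) = (2*j+1) * F / (2 * P * G)"
    using \<open>F > 0\<close> \<open>G > 0\<close> \<open>P > 0\<close> by (simp add: divide_simps)
  show ?thesis unfolding l r e by simp
qed

lemma pderiv_sum': "pderiv (sum f A) = (\<Sum>x\<in>A. pderiv (f x))"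
  by (induction A rule: infinite_finite_induct) (auto simp: pderiv_add)

definition Ig :: "real poly \<Rightarrow> real" where
  "Ig p = (LINT x|lborel. poly p x * exp (-(x^2)))"

lemma Ig_hb: "has_bochner_integral lborel (\<lambda>x. poly p x * exp (-(x^2))) (\<Sum>i\<le>degree p. coeff p i * mom i)"
proof -
  have "has_bochner_integral lborel (\<lambda>x. \<Sum>i\<le>degree p. coeff p i * (exp (-x\<^sup>2) * x ^ i)) (\<Sum>i\<le>degree p. coeff p i * mom i)"
    by (intro has_bochner_integral_sum has_bochner_integral_mult_right mom_int)
  moreover have "(\<lambda>x. \<Sum>i\<le>degree p. coeff p i * (exp (-x\<^sup>2) * x ^ i)) = (\<lambda>x. poly p x * exp (-(x^2)))"
    by (auto simp: poly_altdef sum_distrib_left mult_ac)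
  ultimately show ?thesis by simp
qed

lemma Ig_integrable: "integrable lborel (\<lambda>x. poly p x * exp (-(x^2)))" for p :: "real poly"
  using Ig_hb[of p] by (metis integrable.intros)

lemma Ig_eq: "Ig p = (\<Sum>i\<le>degree p. coeff p i * mom i)"
  unfolding Ig_def using Ig_hb has_bochner_integral_integral_eq by blast

lemma Ig_add: "Ig (p + q) = Ig p + Ig q"
  unfolding Ig_def by (simp add: distrib_right Ig_integrable)

lemma Ig_diff: "Ig (p - q) = Ig p - Ig q"
  unfolding Ig_def by (simp add: left_diff_distrib Ig_integrable)

lemma Ig_smult: "Ig (smult c p) = c * Ig p"
  unfolding Ig_def by (simp add: mult.assoc)

lemma Ig_0[simp]: "Ig 0 = 0" by (simp add: Ig_def)

lemma Ig_sum: "Ig (sum f A) = (\<Sum>a\<in>A. Ig (f a))"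
  by (induction A rule: infinite_finite_induct) (auto simp: Ig_add)

lemma Ig_monom: "Ig (monom c k) = c * mom k"
proof -
  have "has_bochner_integral lborel (\<lambda>x. c * (exp (-x\<^sup>2) * x ^ k)) (c * mom k)"
    by (intro has_bochner_integral_mult_right mom_int)
  then have "has_bochner_integral lborel (\<lambda>x. poly (monom c k) x * exp (-(x^2))) (c*mom k)"
    by (simp add: poly_monom mult_ac)
  then show ?thesis unfolding Ig_def by (rule has_bochner_integral_integral_eq)
qed

lemma Ig_parts: "Ig (pderiv p - [:0,2:] * p) = 0"
proof -
  have "pderiv p - [:0,2:] * p = (\<Sum>i\<le>degree p. pderiv (monom (coeff p i) i) - [:0,2:] * monom (coeff p i) i)"
    by (subst (1 2) poly_as_sum_of_monoms[symmetric])
       (simp add: pderiv_sum' sum_subtractf sum_distrib_left)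
  also have "Ig \<dots> = 0"
  proof -
    have "Ig (pderiv (monom c i) - [:0,2:] * monom c i) = 0" for c i
    proof -
      have "[:0,2:] * monom c i = monom (2*c) (Suc i)"
        by (simp add: monom_Suc smult_monom) 
      then show ?thesis
        using mom_rec[of i]
        by (simp add: pderiv_monom Ig_diff Ig_monom algebra_simps)
    qed
    then show ?thesis by (simp add: Ig_sum)
  qed
  finally show ?thesis .
qed


definition herm :: "nat \<Rightarrow> real poly \<Rightarrow> bool" where
  "herm m f \<longleftrightarrow> pderiv (pderiv f) - [:0,2:] * pderiv f + smult (2 * real m) f = 0"

lemma herm_step: assumes "herm (Suc m) f" shows "herm m (pderiv f)"
proof -
  have "pderiv (pderiv (pderiv f) - [:0,2:] * pderiv f + smult (2 * real (Suc m)) f) = 0"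
    using assms by (simp add: herm_def)
  then have "pderiv (pderiv (pderiv f)) - ([:0,2:] * pderiv (pderiv f) + pderiv f * [:2:]) + smult (2 * real (Suc m)) (pderiv f) = 0"
    by (simp add: pderiv_diff pderiv_add pderiv_mult pderiv_smult pderiv_pCons)
  moreover have "pderiv (pderiv (pderiv f)) - ([:0,2:] * pderiv (pderiv f) + pderiv f * [:2:]) + smult (2 * real (Suc m)) (pderiv f)
     = pderiv (pderiv (pderiv f)) - [:0,2:] * pderiv (pderiv f) + smult (2 * real m) (pderiv f)"
    by (simp add: algebra_simps smult_add_left)
  ultimately show ?thesis by (simp add: herm_def)
qed

lemma herm_Ig: "herm m f \<Longrightarrow> degree p < m \<Longrightarrow> Ig (f * p) = 0"
proof (induction m arbitrary: f p)
  case 0 then show ?case by simp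
next
  case (Suc m)
  have h: "pderiv (pderiv f) - [:0,2:] * pderiv f = - smult (2 * real (Suc m)) f"
    using Suc.prems(1) unfolding herm_def by (simp add: eq_neg_iff_add_eq_0)
  have "0 = Ig (pderiv (pderiv f * p) - [:0,2:] * (pderiv f * p))" by (rule Ig_parts[symmetric])
  also have "pderiv (pderiv f * p) - [:0,2:] * (pderiv f * p) = pderiv f * pderiv p + p * (pderiv (pderiv f) - [:0,2:] * pderiv f)"
    by (simp add: pderiv_mult algebra_simps)
  also have "\<dots> = pderiv f * pderiv p - smult (2 * real (Suc m)) (f * p)"
    unfolding h by (simp add: algebra_simps)
  finally have e: "Ig (pderiv f * pderiv p) = 2 * real (Suc m) * Ig (f * p)"
    by (simp add: Ig_diff Ig_smult)
  have "Ig (pderiv f * pderiv p) = 0"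
  proof (cases "degree p = 0")
    case True
    then have "pderiv p = 0" by (simp add: pderiv_eq_0_iff)
    then show ?thesis by simp
  next
    case False
    then have "degree (pderiv p) < m" using Suc.prems(2) by (simp add: degree_pderiv)
    then show ?thesis using Suc.IH herm_step[OF Suc.prems(1)] by blast
  qed
  then show ?case using e by simp
qed


definition lc :: "real \<Rightarrow> nat \<Rightarrow> nat \<Rightarrow> real" where
  "lc a n k = (if k \<le> n then (-1)^k * ((real n + a) gchoose (n - k)) / fact k else 0)"

lemma coeff_laguerre: "coeff (laguerre a n) k = lc a n k"
  by (simp add: laguerre_def coeff_sum coeff_monom lc_def)

lemma lc_rec: "real (Suc k) * (real k + a + 1) * lc a n (Suc k) + (real n - real k) * lc a n k = 0"
proof (cases "k < n")
  case True
  define m where "m = n - Suc k"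
  have nk: "n - k = Suc m" using True by (simp add: m_def)
  have g: "(real n + a) * ((real n + a) gchoose m) = real m * ((real n + a) gchoose m) + real (Suc m) * ((real n + a) gchoose (Suc m))"
    by (rule gbinomial_mult_1)
  have mm: "real m = real n - real k - 1" using True by (simp add: m_def of_nat_diff)
  define G0 where "G0 = (real n + a) gchoose m"
  define G1 where "G1 = (real n + a) gchoose (Suc m)"
  define F where "F = (fact k :: real)"
  define s where "s = ((-1::real)^k)"
  have key: "(real k + a + 1) * G0 = (real n - real k) * G1"
  proof -
    have "(real n + a - real m) * G0 = real (Suc m) * G1" using g unfolding G0_def G1_def by (simp add: algebra_simps)
    then show ?thesis using mm by (simp add: algebra_simps)
  qed
  have l1: "lc a n (Suc k) = - (s * G0 / (real (Suc k) * F))"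
    using True by (simp add: lc_def m_def G0_def F_def s_def)
  have l0: "lc a n k = s * G1 / F"
    using True nk by (simp add: lc_def G1_def F_def s_def)
  have "F > 0" by (simp add: F_def)
  have l1': "real (Suc k) * lc a n (Suc k) = - (s * G0 / F)"
    unfolding l1 by (simp del: of_nat_Suc)
  have "real (Suc k) * (real k + a + 1) * lc a n (Suc k) + (real n - real k) * lc a n k
      = (real k + a + 1) * (real (Suc k) * lc a n (Suc k)) + (real n - real k) * lc a n k"
    by (simp only: mult_ac)
  also have "\<dots> = (real k + a + 1) * (- (s * G0 / F)) + (real n - real k) * (s * G1 / F)"
    by (simp only: l1' l0)
  also have "\<dots> = (s / F) * ((real n - real k) * G1 - (real k + a + 1) * G0)"
    using \<open>F > 0\<close> by (simp add: field_simps)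
  finally have "real (Suc k) * (real k + a + 1) * lc a n (Suc k) + (real n - real k) * lc a n k
      = (s / F) * ((real n - real k) * G1 - (real k + a + 1) * G0)" .
  then show ?thesis using key by simp
next
  case False
  then show ?thesis by (cases "k = n") (auto simp: lc_def)
qed

lemma laguerre_ode:
  fixes a :: real and n :: nat and L defines "L \<equiv> laguerre a n"
  shows "pCons 0 (pderiv (pderiv L)) + smult (a+1) (pderiv L) - pCons 0 (pderiv L) + smult (real n) L = 0"
proof (rule poly_eqI)
  fix k
  show "coeff (pCons 0 (pderiv (pderiv L)) + smult (a+1) (pderiv L) - pCons 0 (pderiv L) + smult (real n) L) k = coeff 0 k"
  proof (cases k)
    case 0
    then show ?thesis using lc_rec[of 0 a n] by (simp add: coeff_pderiv coeff_laguerre L_def algebra_simps)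
  next
    case (Suc j)
    then show ?thesis using lc_rec[of k a n]
      by (simp add: coeff_pderiv coeff_laguerre L_def algebra_simps)
  qed
qed


definition rp :: "bipoly \<Rightarrow> real poly" where "rp P = poly P [:0,0,1:]"

lemma beval_rp: "beval P x (x^2) = poly (rp P) x"
  unfolding beval_def rp_def
  by (induction P) (auto simp: map_poly_pCons power2_eq_square)

lemma ip_rp: "ip P Q = Ig (rp P * rp Q)"
  by (simp add: ip_def Ig_def beval_rp)

lemma rp_add[simp]: "rp (P + Q) = rp P + rp Q" by (simp add: rp_def)
lemma rp_diff[simp]: "rp (P - Q) = rp P - rp Q" by (simp add: rp_def)
lemma rp_mult[simp]: "rp (P * Q) = rp P * rp Q" by (simp add: rp_def)
lemma rp_smult[simp]: "rp (smult [:a:] P) = smult a (rp P)" by (simp add: rp_def)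
lemma rp_parab[simp]: "rp parab = 0" by (simp add: rp_def parab_def)
lemma rp_mul_x: "rp (mul_x P) = [:0,1:] * rp P" by (simp add: rp_def mul_x_def)

lemma in_y_pCons: "in_y (pCons a p) = pCons [:a:] (in_y p)"
  by (simp add: in_y_def map_poly_pCons)

lemma rp_in_y: "rp (in_y p) = pcompose p [:0,0,1:]"
  by (induction p) (simp_all add: in_y_pCons rp_def pcompose_pCons, simp add: in_y_def)

definition X :: "real poly" where "X = [:0,1:]"

lemma X2: "[:0,0,1:] = X * X" by (simp add: X_def)
lemma pderiv_X[simp]: "pderiv X = 1" by (simp add: X_def pderiv_pCons)
lemma pderiv_XX: "pderiv (X * X) = smult 2 X" by (simp add: X_def pderiv_pCons)
lemma pCons0: "pCons 0 p = X * p" by (simp add: X_def)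

lemma herm_comp:
  fixes L :: "real poly" and a c :: real and m :: nat
  assumes ode: "pCons 0 (pderiv (pderiv L)) + smult (a+1) (pderiv L) - pCons 0 (pderiv L) + smult c L = 0"
  defines "C0 \<equiv> pcompose L (X*X)" and "C1 \<equiv> pcompose (pderiv L) (X*X)" and "C2 \<equiv> pcompose (pderiv (pderiv L)) (X*X)"
  shows "X * X * C2 + smult (a+1) C1 - X * X * C1 + smult c C0 = 0"
    and "pderiv C0 = smult 2 (X * C1)" and "pderiv C1 = smult 2 (X * C2)"
proof -
  have "pcompose (pCons 0 (pderiv (pderiv L)) + smult (a+1) (pderiv L) - pCons 0 (pderiv L) + smult c L) (X*X) = 0"
    using ode by simp
  then show "X * X * C2 + smult (a+1) C1 - X * X * C1 + smult c C0 = 0"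
    by (simp add: pcompose_add pcompose_diff pcompose_smult pcompose_pCons C0_def C1_def C2_def)
  show "pderiv C0 = smult 2 (X * C1)" unfolding C0_def C1_def
    by (simp add: pderiv_pcompose pderiv_XX mult.commute)
  show "pderiv C1 = smult 2 (X * C2)" unfolding C1_def C2_def
    by (simp add: pderiv_pcompose pderiv_XX mult.commute)
qed

definition h1 :: "nat \<Rightarrow> real poly" where "h1 n = rp (Y1 n)"
definition h2 :: "nat \<Rightarrow> real poly" where "h2 n = rp (Y2 n)"

lemma herm_h1: "herm (2*n) (h1 n)"
proof -
  let ?L = "laguerre (-1/2) n"
  define C0 where "C0 = pcompose ?L (X*X)"
  define C1 where "C1 = pcompose (pderiv ?L) (X*X)"
  define C2 where "C2 = pcompose (pderiv (pderiv ?L)) (X*X)"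
  note hc = herm_comp[OF laguerre_ode[of "-1/2" n], folded C0_def C1_def C2_def]
  have h: "h1 n = C0" by (simp add: h1_def Y1_def rp_in_y C0_def X2)
  have "pderiv (pderiv C0) - [:0,2:] * pderiv C0 + smult (2 * real (2*n)) C0
      = smult 4 (X * X * C2 + smult (-1/2+1) C1 - X * X * C1 + smult (real n) C0)"
    apply (simp add: hc(2,3) pderiv_smult pderiv_mult)
    apply (simp add: hc(3) X_def pderiv_pCons pderiv_smult poly_eq_iff coeff_pCons algebra_simps split: nat.split)
    done
  then show ?thesis using hc(1) h by (simp add: herm_def)
qed

lemma herm_h2: assumes "n \<ge> 1" shows "herm (2*n-1) (h2 n)"
proof -
  let ?L = "laguerre (1/2) (n-1)"
  define C0 where "C0 = pcompose ?L (X*X)"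
  define C1 where "C1 = pcompose (pderiv ?L) (X*X)"
  define C2 where "C2 = pcompose (pderiv (pderiv ?L)) (X*X)"
  note hc = herm_comp[OF laguerre_ode[of "1/2" "n-1"], folded C0_def C1_def C2_def]
  have h: "h2 n = X * C0" 
  proof -
    have "pCons 0 X = X * X" by (simp add: X_def)
    then show ?thesis unfolding h2_def Y2_def rp_mul_x rp_in_y C0_def X2 X_def[symmetric] by simp
  qed
  have r: "real (2*n-1) = 2 * real n - 1" using assms by (simp add: of_nat_diff)
  have r2: "real (n-1) = real n - 1" using assms by (simp add: of_nat_diff)
  have "pderiv (pderiv (X * C0)) - [:0,2:] * pderiv (X * C0) + smult (2 * real (2*n-1)) (X * C0)
      = smult 4 (X * (X * X * C2 + smult (1/2+1) C1 - X * X * C1 + smult (real (n-1)) C0))"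
    unfolding r r2
  proof -
    have XX: "X * p = pCons 0 p" for p by (simp add: X_def)
    have XX2: "X * X * p = pCons 0 (pCons 0 p)" for p by (simp add: X_def)
    have e1: "pderiv C0 = pCons 0 (smult 2 C1)" "pderiv C1 = pCons 0 (smult 2 C2)"
      using hc(2,3) by (simp_all add: XX)
    have d1: "pderiv (pCons 0 C0) = C0 + pCons 0 (pCons 0 (smult 2 C1))"
      by (simp add: pderiv_pCons e1)
    have d2: "pderiv (pderiv (pCons 0 C0)) = pCons 0 (smult 6 C1) + pCons 0 (pCons 0 (pCons 0 (smult 4 C2)))"
      unfolding d1 by (simp add: pderiv_add pderiv_pCons pderiv_smult e1 numeral_mult_conv_smult poly_eq_iff coeff_pCons split: nat.split)
    show "pderiv (pderiv (X * C0)) - [:0,2:] * pderiv (X * C0) + smult (2 * (2 * real n - 1)) (X * C0)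
      = smult 4 (X * (X * X * C2 + smult (1/2+1) C1 - X * X * C1 + smult (real n - 1) C0))"
      unfolding XX2 XX d2 unfolding d1
      by (simp add: X_def poly_eq_iff coeff_pCons algebra_simps split: nat.split)
  qed
  then show ?thesis using hc(1) h by (simp add: herm_def)
qed


lemma Ig_pos: assumes "q \<noteq> 0" shows "Ig (q * q) > 0"
proof -
  let ?f = "\<lambda>x. poly (q*q) x * exp (-(x^2))"
  have int: "integrable lborel ?f" by (rule Ig_integrable)
  have nn: "\<And>x. 0 \<le> ?f x" by simp
  have ge: "Ig (q*q) \<ge> 0" unfolding Ig_def using nn by (simp add: integral_nonneg_AE)
  have "Ig (q*q) \<noteq> 0"
  proof
    assume "Ig (q*q) = 0"
    then have "AE x in lborel. ?f x = 0"
      unfolding Ig_def using integral_nonneg_eq_0_iff_AE[OF int] nn by simp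
    then have A1: "AE x in lborel. x \<in> {x. poly q x = 0}" by simp
    have fin: "finite {x. poly q x = 0}" by (rule poly_roots_finite[OF assms])
    have A2: "AE x in lborel. \<forall>s\<in>{x. poly q x = 0}. x \<noteq> s"
      by (rule AE_finite_allI[OF fin]) (rule AE_lborel_singleton)
    have "AE x::real in lborel. False" using eventually_conj[OF A1 A2] by (rule eventually_mono) auto
    then have "ae_filter lborel = (bot :: real filter)" using trivial_limit_def by blast
    then have "emeasure lborel (space lborel) = (0::ennreal)" by (simp add: ae_filter_eq_bot_iff)
    then show False by simp
  qed
  with ge show ?thesis by simp
qed

lemma degree_rp: "degree (rp Q) \<le> 2 * total_degree Q"
proof (cases "Q = 0")
  case True then show ?thesis by (simp add: rp_def)
next
  case False
  let ?S = "{degree (coeff Q j) + j | j. j \<le> degree Q \<and> coeff Q j \<noteq> 0}"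
  have fin: "finite ?S" by simp
  have td: "total_degree Q = Max ?S" using False by (simp add: total_degree_def)
  have "rp Q = (\<Sum>j\<le>degree Q. coeff Q j * [:0,0,1:] ^ j)" by (simp add: rp_def poly_altdef)
  also have "degree \<dots> \<le> 2 * total_degree Q"
  proof (rule degree_sum_le)
    fix j assume j: "j \<in> {..degree Q}"
    show "degree (coeff Q j * [:0,0,1:] ^ j) \<le> 2 * total_degree Q"
    proof (cases "coeff Q j = 0")
      case True then show ?thesis by simp
    next
      case False
      have "degree (coeff Q j) + j \<in> ?S" using j False by auto
      then have "degree (coeff Q j) + j \<le> total_degree Q" unfolding td using fin by simp
      moreover have "degree (coeff Q j * [:0,0,1:] ^ j) \<le> degree (coeff Q j) + 2 * j"
        by (rule order.trans[OF degree_mult_le]) (simp add: degree_power_le order.trans[OF degree_power_le])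
      ultimately show ?thesis by linarith
    qed
  qed simp
  finally show ?thesis .
qed


lemma coeff_in_y: "coeff (in_y p) k = [:coeff p k:]"
  by (simp add: in_y_def coeff_map_poly)

lemma in_y_add: "in_y (p + q) = in_y p + in_y q" by (simp add: poly_eq_iff coeff_in_y)
lemma in_y_diff: "in_y (p - q) = in_y p - in_y q" by (simp add: poly_eq_iff coeff_in_y)
lemma in_y_smult: "in_y (smult c p) = smult [:c:] (in_y p)" by (simp add: poly_eq_iff coeff_in_y mult.commute)
lemma in_y_pCons0: "in_y (pCons 0 p) = mul_y (in_y p)"
  by (simp add: poly_eq_iff coeff_in_y mul_y_def coeff_pCons split: nat.split)
lemma dy_in_y: "dy (in_y p) = in_y (pderiv p)"
  by (simp add: poly_eq_iff coeff_in_y dy_def coeff_pderiv of_nat_poly mult.commute)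
lemma dx_in_y: "dx (in_y p) = 0"
  by (simp add: poly_eq_iff coeff_in_y dx_def coeff_map_poly)
lemma dx_mul_x_in_y: "dx (mul_x (in_y p)) = in_y p"
  by (simp add: poly_eq_iff coeff_in_y dx_def mul_x_def coeff_map_poly pderiv_pCons)
lemma dy_mul_x: "dy (mul_x P) = mul_x (dy P)"
  by (simp add: dy_def mul_x_def pderiv_smult)
lemma mul_y_mul_x: "mul_y (mul_x P) = mul_x (mul_y P)"
  by (simp add: mul_y_def mul_x_def)
lemma mul_x_0: "mul_x 0 = 0" by (simp add: mul_x_def)

lemma Dop_in_y: "Dop (in_y L) = in_y (pCons 0 (pderiv (pderiv L)) + smult (1/2) (pderiv L) - pCons 0 (pderiv L))"
  by (simp add: Dop_def dy_in_y dx_in_y mul_x_0 in_y_add in_y_diff in_y_smult in_y_pCons0)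

lemma Dop_mul_x_in_y: "Dop (mul_x (in_y L)) = mul_x (in_y (pCons 0 (pderiv (pderiv L)) + smult (3/2) (pderiv L) - pCons 0 (pderiv L) - L))"
proof -
  have "Dop (mul_x (in_y L)) = mul_x (in_y (pderiv L)) + mul_x (mul_y (in_y (pderiv (pderiv L))))
     + smult [:1/2:] (mul_x (in_y (pderiv L))) - mul_x (mul_y (in_y (pderiv L))) - mul_x (in_y L)"
    by (simp add: Dop_def dy_mul_x dy_in_y dx_mul_x_in_y mul_y_mul_x)
  also have "\<dots> = mul_x (in_y (pCons 0 (pderiv (pderiv L)) + smult (3/2) (pderiv L) - pCons 0 (pderiv L) - L))"
  proof -
    have s: "in_y (smult (3/2) A) = in_y A + smult [:1/2:] (in_y A)" for A
      by (simp add: poly_eq_iff coeff_in_y)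
    show ?thesis
      unfolding in_y_add in_y_diff s in_y_pCons0 mul_x_def
      by (simp add: smult_add_right smult_diff_right mult.commute)
  qed
  finally show ?thesis .
qed

lemma Dop_Y1: "Dop (Y1 n) = smult [:- real n:] (Y1 n)"
proof -
  have "pCons 0 (pderiv (pderiv (laguerre (-1/2) n))) + smult (1/2) (pderiv (laguerre (-1/2) n)) - pCons 0 (pderiv (laguerre (-1/2) n))
    = smult (- real n) (laguerre (-1/2) n)"
    using laguerre_ode[of "-1/2" n] by (simp add: algebra_simps eq_neg_iff_add_eq_0)
  then show ?thesis unfolding Y1_def Dop_in_y by (simp only: in_y_smult)
qed

lemma Dop_Y2: assumes "n \<ge> 1" shows "Dop (Y2 n) = smult [:- real n:] (Y2 n)"
proof -
  let ?M = "laguerre (1/2) (n-1)"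
  have r2: "real (n-1) = real n - 1" using assms by (simp add: of_nat_diff)
  have "pCons 0 (pderiv (pderiv ?M)) + smult (3/2) (pderiv ?M) - pCons 0 (pderiv ?M) - ?M
    = smult (- real n) ?M"
    using laguerre_ode[of "1/2" "n-1"] unfolding r2 by (simp add: algebra_simps eq_neg_iff_add_eq_0 smult_diff_left)
  then have "Dop (Y2 n) = mul_x (in_y (smult (- real n) ?M))" unfolding Y2_def Dop_mul_x_in_y by simp
  also have "\<dots> = smult [:- real n:] (Y2 n)" unfolding Y2_def in_y_smult mul_x_def
    by (simp add: mult.commute)
  finally show ?thesis .
qed


lemma lag_coeff_n: "coeff (laguerre a n) n \<noteq> 0"
  by (simp add: coeff_laguerre lc_def)

lemma lag_deg: "degree (laguerre a n) = n"
proof (rule antisym)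
  show "degree (laguerre a n) \<le> n" by (rule degree_le) (simp add: coeff_laguerre lc_def)
  show "n \<le> degree (laguerre a n)" by (rule le_degree) (rule lag_coeff_n)
qed

lemma lag_nz: "laguerre a n \<noteq> 0"
  using lag_coeff_n[of a n] by auto

lemma degree_in_y: "degree (in_y p) = degree p"
  unfolding in_y_def by (rule degree_map_poly) simp

lemma h1_eq: "h1 n = pcompose (laguerre (-1/2) n) [:0,0,1:]"
  by (simp add: h1_def Y1_def rp_in_y)

lemma h2_eq: "h2 n = [:0,1:] * pcompose (laguerre (1/2) (n-1)) [:0,0,1:]"
  by (simp add: h2_def Y2_def rp_in_y rp_mul_x)

lemma degree_h1: "degree (h1 n) = 2 * n"
  by (simp add: h1_eq degree_pcompose lag_deg)

lemma h1_nz: "h1 n \<noteq> 0"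
  using pcompose_eq_0[of "laguerre (-1/2) n" "[:0,0,1:]"] lag_nz by (auto simp: h1_eq)

lemma degX2: "degree [:0,0,1::real:] = 2" by simp

lemma pc_nz: "pcompose (laguerre a m) [:0,0,1:] \<noteq> 0"
  by (metis pcompose_eq_0 lag_nz degX2 zero_less_numeral)

lemma degree_h2: assumes "n \<ge> 1" shows "degree (h2 n) = 2 * n - 1"
proof -
  have "degree (h2 n) = 1 + 2 * (n-1)" unfolding h2_eq
    by (subst degree_mult_eq) (simp_all add: pc_nz degree_pcompose lag_deg)
  then show ?thesis using assms by simp
qed

lemma h2_nz: "h2 n \<noteq> 0"
  by (simp add: h2_eq pc_nz)

lemma total_degree_eqI:
  assumes "P \<noteq> 0" "\<And>i. i \<le> degree P \<Longrightarrow> coeff P i \<noteq> 0 \<Longrightarrow> degree (coeff P i) + i \<le> m"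
    "kk \<le> degree P" "coeff P kk \<noteq> 0" "degree (coeff P kk) + kk = m"
  shows "total_degree P = m"
proof -
  have "Max {degree (coeff P j) + j | j. j \<le> degree P \<and> coeff P j \<noteq> 0} = m"
    by (rule Max_eqI) (use assms in auto)
  then show ?thesis using assms(1) by (simp add: total_degree_def)
qed

lemma td_Y1: "total_degree (Y1 n) = n"
proof (rule total_degree_eqI[where kk=n])
  show "Y1 n \<noteq> 0" using lag_nz by (metis coeff_in_y degree_in_y lag_coeff_n leading_coeff_0_iff pCons_eq_0_iff lag_deg Y1_def)
qed (auto simp: Y1_def coeff_in_y degree_in_y lag_deg lag_coeff_n)

lemma td_Y2: assumes "n \<ge> 1" shows "total_degree (Y2 n) = n"
proof (rule total_degree_eqI[where kk="n-1"])
  have c: "coeff (Y2 n) i = [:0, coeff (laguerre (1/2) (n-1)) i:]" for i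
    by (simp add: Y2_def mul_x_def coeff_in_y)
  have d: "degree (Y2 n) = n - 1"
    by (simp add: Y2_def mul_x_def degree_in_y lag_deg)
  show "Y2 n \<noteq> 0" using c[of "n-1"] lag_coeff_n[of "1/2" "n-1"] by auto
  show "n - 1 \<le> degree (Y2 n)" using d by simp
  show "coeff (Y2 n) (n-1) \<noteq> 0" using c[of "n-1"] lag_coeff_n[of "1/2" "n-1"] by auto
  show "degree (coeff (Y2 n) (n-1)) + (n-1) = n" using c[of "n-1"] lag_coeff_n[of "1/2" "n-1"] assms by auto
  fix i assume "i \<le> degree (Y2 n)" "coeff (Y2 n) i \<noteq> 0"
  then show "degree (coeff (Y2 n) i) + i \<le> n" using c[of i] d assms by auto
qed

definition Qm :: "nat \<Rightarrow> bipoly" where "Qm j = monom (monom 1 (j mod 2)) (j div 2)"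

lemma td_Qm: "total_degree (Qm j) = j mod 2 + j div 2"
  by (rule total_degree_eqI[where kk="j div 2"]) (auto simp: Qm_def degree_monom_eq coeff_monom)

lemma rp_Qm: "rp (Qm j) = monom 1 j"
proof -
  have "rp (Qm j) = monom 1 (j mod 2) * [:0,0,1:] ^ (j div 2)"
    by (simp add: rp_def Qm_def poly_monom)
  also have "[:0,0,1::real:] = [:0,1:] ^ 2" by (simp add: power2_eq_square)
  also have "monom 1 (j mod 2) * ([:0,1:] ^ 2) ^ (j div 2) = ([:0,1::real:] ^ (j mod 2 + 2 * (j div 2)))"
    by (simp only: monom_altdef smult_1_left power_mult[symmetric] power_add[symmetric])
  also have "j mod 2 + 2 * (j div 2) = j" by simp
  finally show ?thesis by (simp add: monom_altdef)
qed


lemma orth1: "total_degree Q < n \<Longrightarrow> ip (Y1 n) Q = 0"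
  unfolding ip_rp h1_def[symmetric]
  by (rule herm_Ig[OF herm_h1]) (use degree_rp[of Q] in linarith)

lemma orth2: "n \<ge> 1 \<Longrightarrow> total_degree Q < n \<Longrightarrow> ip (Y2 n) Q = 0"
  unfolding ip_rp h2_def[symmetric]
  by (rule herm_Ig[OF herm_h2]) (use degree_rp[of Q] in linarith)+

lemma inH1: "n \<ge> 1 \<Longrightarrow> in_H n (Y1 n)"
  unfolding in_H_def using td_Y1 orth1 Ig_pos[OF h1_nz] by (simp add: ip_rp h1_def)

lemma inH2: "n \<ge> 1 \<Longrightarrow> in_H n (Y2 n)"
  unfolding in_H_def using td_Y2 orth2 Ig_pos[OF h2_nz] by (simp add: ip_rp h2_def)

lemma orth12: "n \<ge> 1 \<Longrightarrow> ip (Y1 n) (Y2 n) = 0"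
  unfolding ip_rp h1_def[symmetric] h2_def[symmetric]
  by (rule herm_Ig[OF herm_h1]) (simp add: degree_h2)

lemma coeff_h1_top: "coeff (h1 n) (2*n) \<noteq> 0"
  using h1_nz[of n] degree_h1[of n] by (metis leading_coeff_0_iff)

lemma coeff_h2_top: "n \<ge> 1 \<Longrightarrow> coeff (h2 n) (2*n-1) \<noteq> 0"
  using h2_nz[of n] degree_h2[of n] by (metis leading_coeff_0_iff)

lemma indep:
  assumes "n \<ge> 1" "smult [:a:] (Y1 n) + smult [:b:] (Y2 n) = parab * R"
  shows "a = 0 \<and> b = 0"
proof -
  have e: "smult a (h1 n) + smult b (h2 n) = 0"
    using arg_cong[OF assms(2), of rp] by (simp add: h1_def h2_def)
  have "coeff (smult a (h1 n) + smult b (h2 n)) (2*n) = 0" using e by simp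
  moreover have "coeff (h2 n) (2*n) = 0" using degree_h2[OF assms(1)] assms(1)
    by (intro coeff_eq_0) simp
  ultimately have "a * coeff (h1 n) (2*n) = 0" by simp
  then have a: "a = 0" using coeff_h1_top by simp
  then have "smult b (h2 n) = 0" using e by simp
  then have "b = 0" using h2_nz by simp
  with a show ?thesis by simp
qed

lemma parab_dvd: "rp P = 0 \<Longrightarrow> parab dvd P"
  unfolding parab_def using dvd_iff_poly_eq_0[of "- [:0,0,1:]" P] by (simp add: rp_def)

lemma spanning:
  assumes n: "n \<ge> 1" and H: "in_H n P"
  shows "\<exists>a b R. P - (smult [:a:] (Y1 n) + smult [:b:] (Y2 n)) = parab * R"
proof -
  define q where "q = rp P"
  have dq: "degree q \<le> 2 * n" using degree_rp[of P] H by (simp add: in_H_def q_def)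
  have oq: "Ig (q * monom 1 j) = 0" if "j \<le> 2*n-2" for j
  proof -
    have "total_degree (Qm j) < n" using that n unfolding td_Qm by presburger
    then have "ip P (Qm j) = 0" using H by (simp add: in_H_def)
    then show ?thesis by (simp add: ip_rp rp_Qm q_def)
  qed
  define a where "a = coeff q (2*n) / coeff (h1 n) (2*n)"
  define b where "b = coeff (q - smult a (h1 n)) (2*n-1) / coeff (h2 n) (2*n-1)"
  define r where "r = q - smult a (h1 n) - smult b (h2 n)"
  have dr: "degree r \<le> 2*n-2"
  proof (rule degree_le, intro allI impI)
    fix i assume i: "2*n-2 < i"
    have h2i: "coeff (h2 n) i = 0" if "i \<ge> 2*n" for i
      using degree_h2[OF n] that n by (intro coeff_eq_0) simp
    consider "i = 2*n-1" | "i = 2*n" | "i > 2*n" using i n by linarith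
    then show "coeff r i = 0"
    proof cases
      case 1 then show ?thesis using coeff_h2_top[OF n] by (simp add: r_def b_def)
    next
      case 2 then show ?thesis using coeff_h1_top[of n] h2i[of i] by (simp add: r_def a_def)
    next
      case 3
      then have "coeff q i = 0" "coeff (h1 n) i = 0" "coeff (h2 n) i = 0"
        using dq degree_h1[of n] h2i[of i] by (auto intro: coeff_eq_0)
      then show ?thesis by (simp add: r_def)
    qed
  qed
  have or: "Ig (r * monom 1 j) = 0" if "j \<le> 2*n-2" for j
  proof -
    have "Ig (h1 n * monom 1 j) = 0"
      by (rule herm_Ig[OF herm_h1]) (use that n in \<open>simp add: degree_monom_eq\<close>)
    moreover have "Ig (h2 n * monom 1 j) = 0"
      by (rule herm_Ig[OF herm_h2[OF n]]) (use that n in \<open>simp add: degree_monom_eq\<close>)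
    moreover have "r * monom 1 j = q * monom 1 j - smult a (h1 n * monom 1 j) - smult b (h2 n * monom 1 j)"
      by (simp add: r_def algebra_simps)
    ultimately show ?thesis using oq[OF that] by (simp add: Ig_diff Ig_smult)
  qed
  have "r * r = (\<Sum>j\<le>degree r. smult (coeff r j) (r * monom 1 j))"
  proof -
    have "r * r = r * (\<Sum>j\<le>degree r. monom (coeff r j) j)" by (simp add: poly_as_sum_of_monoms)
    also have "\<dots> = (\<Sum>j\<le>degree r. smult (coeff r j) (r * monom 1 j))"
      unfolding sum_distrib_left
    proof (rule sum.cong[OF refl])
      fix j
      have "smult (coeff r j) (r * monom 1 j) = r * smult (coeff r j) (monom 1 j)"
        by (rule mult_smult_right[symmetric])
      then show "r * monom (coeff r j) j = smult (coeff r j) (r * monom 1 j)"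
        by (simp add: smult_monom)
    qed
    finally show ?thesis .
  qed
  then have "Ig (r * r) = 0" using or dr by (simp add: Ig_sum Ig_smult)
  then have r0: "r = 0" using Ig_pos by fastforce
  have "rp (P - (smult [:a:] (Y1 n) + smult [:b:] (Y2 n))) = r"
    by (simp add: r_def q_def h1_def h2_def)
  then have "parab dvd (P - (smult [:a:] (Y1 n) + smult [:b:] (Y2 n)))"
    using r0 parab_dvd by simp
  then show ?thesis by (auto elim!: dvdE)
qed

theorem proposition4p2:
  fixes n :: nat
  assumes "n \<ge> 1"
  shows "in_H n (Y1 n) \<and> in_H n (Y2 n) \<and> ip (Y1 n) (Y2 n) = 0
     \<and> (\<forall>a b. (\<exists>R. smult [:a:] (Y1 n) + smult [:b:] (Y2 n) = parab * R) \<longrightarrow> a = 0 \<and> b = 0)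
     \<and> (\<forall>P. in_H n P \<longrightarrow>
          (\<exists>a b R. P - (smult [:a:] (Y1 n) + smult [:b:] (Y2 n)) = parab * R))
     \<and> Dop (Y1 n) = smult [:- real n:] (Y1 n)
     \<and> Dop (Y2 n) = smult [:- real n:] (Y2 n)"
  using inH1[OF assms] inH2[OF assms] orth12[OF assms] indep[OF assms] spanning[OF assms]
    Dop_Y1 Dop_Y2[OF assms] by blast


end
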